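(* Let $\alpha\in\mathbb{R}$, $\beta\in(0,1)$ and $\sigma\in\mathbb{R}\setminus\{0,1\}$. Let $J\subset(0,\infty)$ be an open interval such that $1+\alpha\sigma q>0$ and $|\alpha\sigma q|<1$ for all $q\in J$. Let $u:J\to\mathbb{R}$ be twice differentiable with $u'(q)>0$ for all $q\in J$. Then $u$ has linear fractional relative risk aversion on $J$, i.e. $$-\frac{q\,u''(q)}{u'(q)}=\frac{\alpha q+\beta}{\alpha\sigma q+1}\quad\text{for all } q\in J,$$ if and only if there exist constants $K>0$ and $C\in\mathbb{R}$ such that for all $q\in J$ $$u(q)=\frac{K\sigma}{\sigma-1}\,(1+\alpha\sigma q)^{\beta-\frac{1}{\sigma}}\,q^{1-\beta}\left[1+\frac{\beta-\frac{1}{\sigma}}{1-\beta}\;{}_2F_1\!\left(1-\tfrac{1}{\sigma},\,1;\,2-\beta;\,-\alpha\sigma q\right)\right]+C .$$ In this case $u'(q)=K(1+\alpha\sigma q)^{\beta-\frac1\sigma}q^{-\beta}$.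
   Context: ${}_2F_1(a,b;c;z)=\sum_{n=0}^\infty\frac{(a)_n(b)_n}{(c)_n}\frac{z^n}{n!}$ for $|z|<1$ is the Gauss hypergeometric function, where $(a)_n=a(a+1)\cdots(a+n-1)$, $(a)_0=1$, is the rising Pochhammer symbol. All real powers of positive reals are the real (principal) ones. *)

theory Defs
  imports "HOL-Analysis.Analysis"
begin

text \<open>Gauss hypergeometric function 2F1(a,b;c;z) as its power series (meant for |z| < 1).\<close>
definition hyp2F1 :: "real \<Rightarrow> real \<Rightarrow> real \<Rightarrow> real \<Rightarrow> real" where
  "hyp2F1 a b c z = (\<Sum>n. pochhammer a n * pochhammer b n / pochhammer c n * z ^ n / fact n)"

end

theory Submission
  imports Defs
begin


definition hc :: "real \<Rightarrow> real \<Rightarrow> nat \<Rightarrow> real" where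
  "hc a c n = pochhammer a n / pochhammer c n"

lemma hc_Suc:
  assumes "c > 0"
  shows "hc a c (Suc n) = hc a c n * (a + n) / (c + n)"
  using pochhammer_pos[OF assms, of n] assms
  by (simp add: hc_def pochhammer_Suc field_simps)

lemma hyp_eq: "hyp2F1 a 1 c z = (\<Sum>n. hc a c n * z ^ n)"
  unfolding hyp2F1_def hc_def
  by (simp add: pochhammer_fact[symmetric])

lemma hc_summable:
  assumes c: "c > 0" and z: "\<bar>z\<bar> < 1"
  shows "summable (\<lambda>n. hc a c n * z ^ n)"
proof -
  define r where "r = (1 + \<bar>z\<bar>) / 2"
  have r: "\<bar>z\<bar> < r" "r < 1" using z by (auto simp: r_def)
  define N where "N = nat \<lceil>\<bar>a\<bar> / (r - \<bar>z\<bar>)\<rceil>"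
  show ?thesis
  proof (rule summable_ratio_test[of r N])
    show "r < 1" by fact
    fix n assume n: "N \<le> n"
    have "\<bar>a\<bar> / (r - \<bar>z\<bar>) \<le> real n" using n unfolding N_def by linarith
    hence h1: "\<bar>a\<bar> \<le> real n * (r - \<bar>z\<bar>)" using r by (simp add: field_simps)
    have "\<bar>a + n\<bar> * \<bar>z\<bar> \<le> (\<bar>a\<bar> + n) * \<bar>z\<bar>"
      by (intro mult_right_mono) auto
    also have "\<dots> \<le> \<bar>a\<bar> + n * \<bar>z\<bar>" using z by (simp add: algebra_simps mult_left_le)
    also have "\<dots> \<le> r * n" using h1 by (simp add: algebra_simps)
    also have "\<dots> \<le> r * (c + n)" using r c z by (intro mult_left_mono) auto
    finally have key: "\<bar>a + n\<bar> * \<bar>z\<bar> \<le> r * (c + n)" .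
    have cn: "c + n > 0" using c by simp
    have "hc a c (Suc n) * z ^ Suc n = hc a c n * z^n * ((a + n) * z / (c + n))"
      using cn by (simp add: hc_Suc[OF c] field_simps)
    hence "norm (hc a c (Suc n) * z ^ Suc n) = \<bar>hc a c n\<bar> * \<bar>z\<bar>^n * (\<bar>a + n\<bar> * \<bar>z\<bar> / (c + n))"
      using cn by (simp add: abs_mult power_abs abs_divide)
    also have "\<dots> \<le> \<bar>hc a c n\<bar> * \<bar>z\<bar>^n * r"
      using key cn by (intro mult_left_mono) (auto simp: field_simps)
    also have "\<dots> = r * norm (hc a c n * z ^ n)" by (simp add: abs_mult power_abs)
    finally show "norm (hc a c (Suc n) * z ^ Suc n) \<le> r * norm (hc a c n * z ^ n)" .
  qed
qed

lemma hc_ode: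
  assumes c: "c > 0" and z: "\<bar>z\<bar> < 1"
  shows "((\<lambda>z. \<Sum>n. hc a c n * z ^ n) has_field_derivative (\<Sum>n. diffs (hc a c) n * z ^ n)) (at z)"
    and "(c - 1) * (\<Sum>n. hc a c n * z ^ n) - a * z * (\<Sum>n. hc a c n * z ^ n)
         + z * (\<Sum>n. diffs (hc a c) n * z ^ n) - z^2 * (\<Sum>n. diffs (hc a c) n * z ^ n) = c - 1"
proof -
  have sm: "\<And>w. norm w < 1 \<Longrightarrow> summable (\<lambda>n. hc a c n * w ^ n)"
    using hc_summable[OF c] by auto
  show "((\<lambda>z. \<Sum>n. hc a c n * z ^ n) has_field_derivative (\<Sum>n. diffs (hc a c) n * z ^ n)) (at z)"
    by (rule termdiffs_strong'[OF sm]) (use z in auto)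
  define H where "H = (\<Sum>n. hc a c n * z ^ n)"
  define D where "D = (\<Sum>n. diffs (hc a c) n * z ^ n)"
  have s1: "(\<lambda>n. hc a c n * z ^ n) sums H" unfolding H_def using sm z by (simp add: summable_sums)
  have s2: "(\<lambda>n. diffs (hc a c) n * z ^ n) sums D" unfolding D_def
    using termdiff_converges[of z 1 "hc a c"] sm z by (simp add: summable_sums)
  have s3: "(\<lambda>n. n * hc a c n * z ^ n) sums (z * D)"
  proof -
    have "(\<lambda>n. z * (diffs (hc a c) n * z ^ n)) sums (z * D)" by (rule sums_mult[OF s2])
    hence "(\<lambda>n. (\<lambda>m. m * hc a c m * z ^ m) (Suc n)) sums (z * D)"
      by (simp add: diffs_def algebra_simps)
    thus ?thesis using sums_Suc_iff[of "\<lambda>m. real m * hc a c m * z ^ m" "z*D"] by simp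
  qed
  define g where "g m = (c - 1 + m) * hc a c m * z ^ m" for m :: nat
  have sg: "g sums ((c - 1) * H + z * D)"
  proof -
    have "(\<lambda>n. (c - 1) * (hc a c n * z ^ n) + n * hc a c n * z ^ n) sums ((c - 1) * H + z * D)"
      by (intro sums_add sums_mult s1 s3)
    thus ?thesis unfolding g_def by (simp add: algebra_simps)
  qed
  have "(\<lambda>n. g (Suc n)) sums ((c - 1) * H + z * D - g 0)"
    using sg by (simp add: sums_Suc_iff)
  moreover have "(\<lambda>n. g (Suc n)) = (\<lambda>n. a * z * (hc a c n * z ^ n) + z * (n * hc a c n * z ^ n))"
  proof
    fix n
    have "c + real n > 0" using c by simp
    hence cn: "c + real n \<noteq> 0" by simp
    show "g (Suc n) = a * z * (hc a c n * z ^ n) + z * (n * hc a c n * z ^ n)"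
      unfolding g_def using cn by (simp add: hc_Suc[OF c] field_simps)
  qed
  ultimately have "(\<lambda>n. a * z * (hc a c n * z ^ n) + z * (n * hc a c n * z ^ n)) sums ((c - 1) * H + z * D - g 0)"
    by simp
  moreover have "(\<lambda>n. a * z * (hc a c n * z ^ n) + z * (n * hc a c n * z ^ n)) sums (a * z * H + z * (z * D))"
    by (intro sums_add sums_mult s1 s3)
  ultimately have "(c - 1) * H + z * D - g 0 = a * z * H + z * (z * D)" using sums_unique2 by blast
  moreover have "g 0 = c - 1" by (simp add: g_def hc_def)
  ultimately show "(c - 1) * H - a * z * H + z * D - z^2 * D = c - 1"
    by (simp add: power2_eq_square algebra_simps)
qed


lemma bracket:
  fixes s q H D b g a :: real
  assumes ode: "(1 - b) * H - a * (-s*q) * H + (-s*q) * D - (-s*q)^2 * D = 1 - b"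
   and a: "a = 1 - b + g" and b: "b \<noteq> 1" and sq: "1 + s*q \<noteq> 0"
  shows "g / (1+s*q) * s * q * (1 + g/(1-b) * H) + (1-b) * (1 + g/(1-b)*H) + q * (g/(1-b) * (D * (-s))) = a"
proof -
  define k where "k = g / (1-b)"
  have gk: "g = k * (1-b)" using b by (simp add: k_def)
  have "g / (1+s*q) * s * q * (1 + k * H) + (1-b) * (1 + k*H) + q * (k * (D * (-s)))
     = (g * s * q * (1 + k * H) + (1 + s * q) * ((1 - b) * (1 + k * H) - q * k * D * s))/(1+s*q)"
    using sq by (simp add: field_simps)
  also have "g * s * q * (1 + k * H) + (1 + s * q) * ((1 - b) * (1 + k * H) - q * k * D * s) = a * (1+s*q)"
    using ode a gk by algebra
  finally show ?thesis using sq by (simp add: k_def)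
qed

lemma F_deriv:
  fixes \<alpha> \<beta> \<sigma> q :: real
  assumes beta: "0 < \<beta>" "\<beta> < 1" and sigma: "\<sigma> \<noteq> 0"
    and q: "q > 0" "1 + \<alpha> * \<sigma> * q > 0" "\<bar>\<alpha> * \<sigma> * q\<bar> < 1"
  shows "((\<lambda>q. (1 + \<alpha> * \<sigma> * q) powr (\<beta> - 1 / \<sigma>) * q powr (1 - \<beta>)
              * (1 + (\<beta> - 1 / \<sigma>) / (1 - \<beta>) * hyp2F1 (1 - 1 / \<sigma>) 1 (2 - \<beta>) (- \<alpha> * \<sigma> * q)))
         has_real_derivative ((\<sigma> - 1) / \<sigma> * ((1 + \<alpha> * \<sigma> * q) powr (\<beta> - 1 / \<sigma>) * q powr (- \<beta>)))) (at q)"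
proof -
  define s where "s = \<alpha> * \<sigma>"
  define g where "g = \<beta> - 1 / \<sigma>"
  define a where "a = 1 - 1 / \<sigma>"
  define c where "c = 2 - \<beta>"
  define Hf where "Hf = (\<lambda>z. \<Sum>n. hc a c n * z ^ n)"
  define D where "D = (\<Sum>n. diffs (hc a c) n * (-s*q) ^ n)"
  have c0: "c > 0" using beta by (simp add: c_def)
  have z: "\<bar>-s*q\<bar> < 1" using q by (simp add: s_def)
  note ode = hc_ode[OF c0 z, of a]
  have dH: "(Hf has_real_derivative D) (at (-s*q))" using ode(1) by (simp add: Hf_def D_def)
  have odeeq: "(1 - \<beta>) * Hf (-s*q) - a * (-s*q) * Hf (-s*q) + (-s*q) * D - (-s*q)^2 * D = 1 - \<beta>"
    using ode(2) by (simp add: Hf_def D_def c_def)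
  have eqf: "(\<lambda>q. (1 + \<alpha> * \<sigma> * q) powr (\<beta> - 1 / \<sigma>) * q powr (1 - \<beta>)
              * (1 + (\<beta> - 1 / \<sigma>) / (1 - \<beta>) * hyp2F1 (1 - 1 / \<sigma>) 1 (2 - \<beta>) (- \<alpha> * \<sigma> * q)))
     = (\<lambda>q. (1 + s * q) powr g * q powr (1 - \<beta>) * (1 + g / (1 - \<beta>) * Hf (-s * q)))"
    by (simp add: hyp_eq s_def g_def a_def c_def Hf_def)
  have sq: "1 + s * q > 0" using q by (simp add: s_def)
  have d1: "((\<lambda>q. (1 + s * q) powr g) has_real_derivative g * (1 + s*q) powr (g - 1) * s) (at q)"
    using DERIV_fun_powr[of "\<lambda>q. 1 + s * q" s q g] sq
    by (auto intro!: derivative_eq_intros)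
  have d2: "((\<lambda>q. q powr (1 - \<beta>)) has_real_derivative (1 - \<beta>) * q powr (- \<beta>)) (at q)"
    using has_real_derivative_powr[OF q(1), of "1 - \<beta>"] by simp
  have d3: "((\<lambda>q. Hf (-s * q)) has_real_derivative D * (-s)) (at q)"
  proof -
    have "((\<lambda>q. -s*q) has_real_derivative -s) (at q)" by (auto intro!: derivative_eq_intros)
    from DERIV_chain2[where f=Hf and g="\<lambda>q. -s*q" and x=q, OF _ this] dH show ?thesis by simp
  qed
  have d: "((\<lambda>q. (1 + s * q) powr g * q powr (1 - \<beta>) * (1 + g / (1 - \<beta>) * Hf (-s * q)))
      has_real_derivative
       (g * (1 + s*q) powr (g - 1) * s * q powr (1 - \<beta>) + (1 + s * q) powr g * ((1 - \<beta>) * q powr (- \<beta>)))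
        * (1 + g / (1 - \<beta>) * Hf (-s * q)) + ((1 + s * q) powr g * q powr (1 - \<beta>)) * (g / (1 - \<beta>) * (D * (-s)))) (at q)"
  proof -
    have d4: "((\<lambda>q. 1 + g/(1-\<beta>) * Hf(-s*q)) has_real_derivative (g/(1-\<beta>) * (D*(-s)))) (at q)"
      by (rule DERIV_cong[OF DERIV_add[OF DERIV_const[where k=1] DERIV_cmult[where c="g/(1-\<beta>)", OF d3]]]) simp
    show ?thesis
      by (rule DERIV_cong[OF DERIV_mult[OF DERIV_mult[OF d1 d2] d4]]) (simp add: algebra_simps)
  qed
  define P where "P = (1 + s * q) powr g"
  define Q where "Q = q powr (- \<beta>)"
  have p1: "(1 + s*q) powr (g - 1) = P / (1 + s * q)" using sq by (simp add: P_def powr_diff)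
  have p2: "q powr (1 - \<beta>) = q * Q" using q by (simp add: Q_def powr_diff powr_minus field_simps)
  have br: "g / (1+s*q) * s * q * (1 + g/(1-\<beta>) * Hf (-s*q)) + (1-\<beta>) * (1 + g/(1-\<beta>) * Hf (-s*q))
       + q * (g/(1-\<beta>) * (D * (-s))) = a"
    by (rule bracket[OF odeeq]) (use beta sq in \<open>auto simp: a_def g_def\<close>)
  have "(g * (1 + s*q) powr (g - 1) * s * q powr (1 - \<beta>) + (1 + s * q) powr g * ((1 - \<beta>) * q powr (- \<beta>)))
        * (1 + g / (1 - \<beta>) * Hf (-s * q)) + ((1 + s * q) powr g * q powr (1 - \<beta>)) * (g / (1 - \<beta>) * (D * (-s)))
      = P * Q * (g / (1+s*q) * s * q * (1 + g/(1-\<beta>) * Hf (-s*q)) + (1-\<beta>) * (1 + g/(1-\<beta>) * Hf (-s*q))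
       + q * (g/(1-\<beta>) * (D * (-s))))"
    unfolding p1 p2 P_def[symmetric] Q_def[symmetric]
    by (simp add: divide_inverse algebra_simps)
  also have "\<dots> = (\<sigma> - 1) / \<sigma> * ((1 + \<alpha> * \<sigma> * q) powr (\<beta> - 1 / \<sigma>) * q powr (- \<beta>))"
    unfolding br using sigma by (simp add: P_def Q_def a_def s_def g_def field_simps)
  finally show ?thesis using d unfolding eqf by simp
qed

lemma gg_deriv:
  fixes \<alpha> \<beta> \<sigma> q :: real
  assumes q: "q > 0" "1 + \<alpha> * \<sigma> * q > 0" and sigma: "\<sigma> \<noteq> 0"
  shows "((\<lambda>q. (1 + \<alpha> * \<sigma> * q) powr (\<beta> - 1 / \<sigma>) * q powr (- \<beta>)) has_real_derivative
     ((1 + \<alpha> * \<sigma> * q) powr (\<beta> - 1 / \<sigma>) * q powr (- \<beta>)) * (- (\<alpha> * q + \<beta>) / (q * (\<alpha> * \<sigma> * q + 1)))) (at q)"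
proof -
  define s where "s = \<alpha> * \<sigma>"
  define g where "g = \<beta> - 1 / \<sigma>"
  have sq: "1 + s * q > 0" using q by (simp add: s_def)
  have d1: "((\<lambda>q. (1 + s * q) powr g) has_real_derivative g * (1 + s*q) powr (g - 1) * s) (at q)"
    using DERIV_fun_powr[of "\<lambda>q. 1 + s * q" s q g] sq
    by (auto intro!: derivative_eq_intros)
  have d2: "((\<lambda>q. q powr (- \<beta>)) has_real_derivative (- \<beta>) * q powr (- \<beta> - 1)) (at q)"
    using has_real_derivative_powr[OF q(1), of "- \<beta>"] by simp
  define P where "P = (1 + s * q) powr g"
  define Q where "Q = q powr (- \<beta>)"
  have p1: "(1 + s*q) powr (g - 1) = P / (1 + s * q)" using sq by (simp add: P_def powr_diff)
  have p2: "q powr (- \<beta> - 1) = Q / q" using q by (simp add: Q_def powr_diff)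
  have "g * (1 + s*q) powr (g - 1) * s * q powr (- \<beta>) + (- \<beta>) * q powr (- \<beta> - 1) * (1 + s * q) powr g
      = P * Q * ((g * s * q - \<beta> * (1 + s * q)) / (q * (1 + s * q)))"
    unfolding p1 p2 P_def[symmetric] Q_def[symmetric] using q sq
    by (simp add: field_simps)
  also have "g * s * q - \<beta> * (1 + s * q) = - (\<alpha> * q + \<beta>)"
    using sigma by (simp add: g_def s_def field_simps)
  finally have e: "g * (1 + s*q) powr (g - 1) * s * q powr (- \<beta>) + (- \<beta>) * q powr (- \<beta> - 1) * (1 + s * q) powr g
      = P * Q * (- (\<alpha> * q + \<beta>) / (q * (\<alpha> * \<sigma> * q + 1)))"
    by (simp add: s_def add.commute)
  show ?thesis
    using DERIV_cong[OF DERIV_mult[OF d1 d2] e] by (simp add: P_def Q_def s_def g_def)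
qed


theorem theorem1:
  fixes \<alpha> \<beta> \<sigma> :: real and J :: "real set" and u :: "real \<Rightarrow> real"
  assumes beta: "0 < \<beta>" "\<beta> < 1"
    and sigma: "\<sigma> \<noteq> 0" "\<sigma> \<noteq> 1"
    and J: "open J" "is_interval J" "J \<subseteq> {0<..}"
    and Jcond: "\<forall>q\<in>J. 1 + \<alpha> * \<sigma> * q > 0 \<and> \<bar>\<alpha> * \<sigma> * q\<bar> < 1"
    and diff1: "\<forall>q\<in>J. u differentiable (at q)"
    and diff2: "\<forall>q\<in>J. deriv u differentiable (at q)"
    and pos: "\<forall>q\<in>J. deriv u q > 0"
  shows "((\<forall>q\<in>J. - (q * deriv (deriv u) q) / deriv u q = (\<alpha> * q + \<beta>) / (\<alpha> * \<sigma> * q + 1))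
          \<longleftrightarrow>
          (\<exists>K C. K > 0 \<and> (\<forall>q\<in>J. u q =
              K * \<sigma> / (\<sigma> - 1) * (1 + \<alpha> * \<sigma> * q) powr (\<beta> - 1 / \<sigma>) * q powr (1 - \<beta>)
              * (1 + (\<beta> - 1 / \<sigma>) / (1 - \<beta>) * hyp2F1 (1 - 1 / \<sigma>) 1 (2 - \<beta>) (- \<alpha> * \<sigma> * q)) + C)))
      \<and> (\<forall>K C. K > 0 \<and> (\<forall>q\<in>J. u q =
              K * \<sigma> / (\<sigma> - 1) * (1 + \<alpha> * \<sigma> * q) powr (\<beta> - 1 / \<sigma>) * q powr (1 - \<beta>)
              * (1 + (\<beta> - 1 / \<sigma>) / (1 - \<beta>) * hyp2F1 (1 - 1 / \<sigma>) 1 (2 - \<beta>) (- \<alpha> * \<sigma> * q)) + C)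
            \<longrightarrow> (\<forall>q\<in>J. deriv u q = K * (1 + \<alpha> * \<sigma> * q) powr (\<beta> - 1 / \<sigma>) * q powr (- \<beta>)))"
proof -
  define F where "F = (\<lambda>q. (1 + \<alpha> * \<sigma> * q) powr (\<beta> - 1 / \<sigma>) * q powr (1 - \<beta>)
              * (1 + (\<beta> - 1 / \<sigma>) / (1 - \<beta>) * hyp2F1 (1 - 1 / \<sigma>) 1 (2 - \<beta>) (- \<alpha> * \<sigma> * q)))"
  define gg where "gg = (\<lambda>q. (1 + \<alpha> * \<sigma> * q) powr (\<beta> - 1 / \<sigma>) * q powr (- \<beta>))"
  define R where "R = (\<lambda>q. - (\<alpha> * q + \<beta>) / (q * (\<alpha> * \<sigma> * q + 1)))"
  have qpos: "q > 0" if "q \<in> J" for q using J(3) that by auto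
  have FD: "(F has_real_derivative (\<sigma> - 1) / \<sigma> * gg q) (at q)" if "q \<in> J" for q
  proof -
    have "1 + \<alpha> * \<sigma> * q > 0" "\<bar>\<alpha> * \<sigma> * q\<bar> < 1" using Jcond that by auto
    from F_deriv[OF beta sigma(1) qpos[OF that] this] show ?thesis unfolding F_def gg_def .
  qed
  have gD: "(gg has_real_derivative gg q * R q) (at q)" if "q \<in> J" for q
  proof -
    have "1 + \<alpha> * \<sigma> * q > 0" using Jcond that by auto
    from gg_deriv[OF qpos[OF that] this sigma(1)] show ?thesis unfolding gg_def R_def .
  qed
  have ggpos: "gg q > 0" if "q \<in> J" for q
    unfolding gg_def using qpos[OF that] Jcond that by auto
  have ueq: "(\<forall>q\<in>J. u q = K * \<sigma> / (\<sigma> - 1) * (1 + \<alpha> * \<sigma> * q) powr (\<beta> - 1 / \<sigma>) * q powr (1 - \<beta>)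
              * (1 + (\<beta> - 1 / \<sigma>) / (1 - \<beta>) * hyp2F1 (1 - 1 / \<sigma>) 1 (2 - \<beta>) (- \<alpha> * \<sigma> * q)) + C)
        \<longleftrightarrow> (\<forall>q\<in>J. u q = K * \<sigma> / (\<sigma> - 1) * F q + C)" for K C
    by (simp add: F_def mult.assoc)
  have part2: "\<forall>q\<in>J. deriv u q = K * gg q"
    if K: "K > 0" and u: "\<forall>q\<in>J. u q = K * \<sigma> / (\<sigma> - 1) * F q + C" for K C
  proof
    fix q assume q: "q \<in> J"
    have "((\<lambda>q. K * \<sigma> / (\<sigma> - 1) * F q + C) has_real_derivative K * \<sigma> / (\<sigma> - 1) * ((\<sigma> - 1) / \<sigma> * gg q) + 0) (at q)"
      by (rule DERIV_add[OF DERIV_cmult[OF FD[OF q]] DERIV_const])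
    moreover have "K * \<sigma> / (\<sigma> - 1) * ((\<sigma> - 1) / \<sigma> * gg q) + 0 = K * gg q"
      using sigma by (simp add: field_simps)
    ultimately have "((\<lambda>q. K * \<sigma> / (\<sigma> - 1) * F q + C) has_real_derivative K * gg q) (at q)" by simp
    hence "(u has_real_derivative K * gg q) (at q)"
      by (rule has_field_derivative_transform_within_open[OF _ J(1) q]) (use u in simp)
    thus "deriv u q = K * gg q" by (rule DERIV_imp_deriv)
  qed
  have dd: "(deriv u has_real_derivative deriv (deriv u) q) (at q)" if "q \<in> J" for q
    using diff2 that DERIV_deriv_iff_real_differentiable by blast
  have d1: "(u has_real_derivative deriv u q) (at q)" if "q \<in> J" for q
    using diff1 that DERIV_deriv_iff_real_differentiable by blast
  have RRA_iff: "- (q * deriv (deriv u) q) / deriv u q = (\<alpha> * q + \<beta>) / (\<alpha> * \<sigma> * q + 1)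
      \<longleftrightarrow> deriv (deriv u) q = deriv u q * R q" if q: "q \<in> J" for q
  proof -
    have "deriv u q \<noteq> 0" "q \<noteq> 0" "\<alpha> * \<sigma> * q + 1 \<noteq> 0"
    proof -
      have "deriv u q > 0" "q > 0" "1 + \<alpha> * \<sigma> * q > 0" using pos qpos[OF q] Jcond q by auto
      thus "deriv u q \<noteq> 0" "q \<noteq> 0" "\<alpha> * \<sigma> * q + 1 \<noteq> 0" by (simp_all add: add.commute)
    qed
    moreover have "q * (\<alpha> * \<sigma> * q + 1) \<noteq> 0" using calculation by simp
    ultimately show ?thesis unfolding R_def by (simp add: field_simps) (rule iffI; linarith)
  qed
  have dir1: "\<exists>K C. K > 0 \<and> (\<forall>q\<in>J. u q = K * \<sigma> / (\<sigma> - 1) * F q + C)"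
    if H: "\<forall>q\<in>J. deriv (deriv u) q = deriv u q * R q"
  proof (cases "J = {}")
    case True thus ?thesis by (intro exI[of _ 1]) auto
  next
    case False
    then obtain q0 where q0: "q0 \<in> J" by blast
    have "\<exists>c. \<forall>x\<in>J. deriv u x / gg x = c"
    proof (rule has_field_derivative_zero_constant)
      show "convex J" using J(2) by (rule is_interval_convex)
      fix x assume x: "x \<in> J"
      have "((\<lambda>x. deriv u x / gg x) has_real_derivative
          (deriv (deriv u) x * gg x - deriv u x * (gg x * R x)) / (gg x * gg x)) (at x)"
        by (rule DERIV_divide[OF dd[OF x] gD[OF x]]) (use ggpos[OF x] in simp)
      moreover have "deriv (deriv u) x * gg x - deriv u x * (gg x * R x) = 0" using H x by simp
      hence "(deriv (deriv u) x * gg x - deriv u x * (gg x * R x)) / (gg x * gg x) = 0" by simp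
      ultimately have "((\<lambda>x. deriv u x / gg x) has_real_derivative 0) (at x)" by (rule DERIV_cong)
      thus "((\<lambda>x. deriv u x / gg x) has_real_derivative 0) (at x within J)"
        by (rule has_field_derivative_at_within)
    qed
    then obtain K where K: "\<forall>x\<in>J. deriv u x / gg x = K" by blast
    have "K = deriv u q0 / gg q0" using K q0 by metis
    hence Kpos: "K > 0" using q0 pos ggpos[OF q0] by simp
    have ud: "\<forall>x\<in>J. deriv u x = K * gg x"
    proof
      fix x assume x: "x \<in> J"
      have "gg x \<noteq> 0" using ggpos[OF x] by simp
      moreover have "deriv u x / gg x = K" using K x by blast
      ultimately show "deriv u x = K * gg x" by (simp add: field_simps)
    qed
    have "\<exists>C. \<forall>x\<in>J. u x - K * \<sigma> / (\<sigma> - 1) * F x = C"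
    proof (rule has_field_derivative_zero_constant)
      show "convex J" using J(2) by (rule is_interval_convex)
      fix x assume x: "x \<in> J"
      have "((\<lambda>x. u x - K * \<sigma> / (\<sigma> - 1) * F x) has_real_derivative
          deriv u x - K * \<sigma> / (\<sigma> - 1) * ((\<sigma> - 1) / \<sigma> * gg x)) (at x)"
        by (rule DERIV_diff[OF d1[OF x] DERIV_cmult[OF FD[OF x]]])
      moreover have "deriv u x - K * \<sigma> / (\<sigma> - 1) * ((\<sigma> - 1) / \<sigma> * gg x) = 0"
      proof -
        have "K * \<sigma> / (\<sigma> - 1) * ((\<sigma> - 1) / \<sigma> * gg x) = K * gg x"
          using sigma by (simp add: field_simps)
        moreover have "deriv u x = K * gg x" using ud x by blast
        ultimately show ?thesis by linarith
      qed
      ultimately have "((\<lambda>x. u x - K * \<sigma> / (\<sigma> - 1) * F x) has_real_derivative 0) (at x)" by (rule DERIV_cong)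
      thus "((\<lambda>x. u x - K * \<sigma> / (\<sigma> - 1) * F x) has_real_derivative 0) (at x within J)"
        by (rule has_field_derivative_at_within)
    qed
    then obtain C where "\<forall>x\<in>J. u x - K * \<sigma> / (\<sigma> - 1) * F x = C" by blast
    hence "\<forall>x\<in>J. u x = K * \<sigma> / (\<sigma> - 1) * F x + C"
      by (metis diff_eq_eq add.commute)
    with Kpos show ?thesis by blast
  qed
  have dir2: "\<forall>q\<in>J. deriv (deriv u) q = deriv u q * R q"
    if K: "K > 0" and u: "\<forall>q\<in>J. u q = K * \<sigma> / (\<sigma> - 1) * F q + C" for K C
  proof
    fix q assume q: "q \<in> J"
    have ud: "\<forall>q\<in>J. deriv u q = K * gg q" by (rule part2[OF K u])
    have "((\<lambda>q. K * gg q) has_real_derivative K * (gg q * R q)) (at q)"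
      by (rule DERIV_cmult[OF gD[OF q]])
    hence "(deriv u has_real_derivative K * (gg q * R q)) (at q)"
      by (rule has_field_derivative_transform_within_open[OF _ J(1) q]) (use ud in auto)
    hence "deriv (deriv u) q = K * (gg q * R q)" by (rule DERIV_imp_deriv)
    thus "deriv (deriv u) q = deriv u q * R q" using ud q by simp
  qed
  have A: "(\<forall>q\<in>J. - (q * deriv (deriv u) q) / deriv u q = (\<alpha> * q + \<beta>) / (\<alpha> * \<sigma> * q + 1))
      \<longleftrightarrow> (\<forall>q\<in>J. deriv (deriv u) q = deriv u q * R q)"
    by (rule ball_cong[OF refl]) (rule RRA_iff)
  have B: "(\<forall>q\<in>J. deriv (deriv u) q = deriv u q * R q)
      \<longleftrightarrow> (\<exists>K C. K > 0 \<and> (\<forall>q\<in>J. u q = K * \<sigma> / (\<sigma> - 1) * F q + C))"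
  proof
    assume "\<forall>q\<in>J. deriv (deriv u) q = deriv u q * R q"
    thus "\<exists>K C. K > 0 \<and> (\<forall>q\<in>J. u q = K * \<sigma> / (\<sigma> - 1) * F q + C)" by (rule dir1)
  next
    assume "\<exists>K C. K > 0 \<and> (\<forall>q\<in>J. u q = K * \<sigma> / (\<sigma> - 1) * F q + C)"
    then obtain K C where "K > 0" "\<forall>q\<in>J. u q = K * \<sigma> / (\<sigma> - 1) * F q + C" by blast
    thus "\<forall>q\<in>J. deriv (deriv u) q = deriv u q * R q" by (rule dir2)
  qed
  have C: "\<forall>K C. K > 0 \<and> (\<forall>q\<in>J. u q = K * \<sigma> / (\<sigma> - 1) * F q + C)
      \<longrightarrow> (\<forall>q\<in>J. deriv u q = K * (1 + \<alpha> * \<sigma> * q) powr (\<beta> - 1 / \<sigma>) * q powr (- \<beta>))"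
  proof (intro allI impI)
    fix K C assume "K > 0 \<and> (\<forall>q\<in>J. u q = K * \<sigma> / (\<sigma> - 1) * F q + C)"
    hence "\<forall>q\<in>J. deriv u q = K * gg q" using part2 by blast
    thus "\<forall>q\<in>J. deriv u q = K * (1 + \<alpha> * \<sigma> * q) powr (\<beta> - 1 / \<sigma>) * q powr (- \<beta>)"
      unfolding gg_def by (simp add: mult.assoc)
  qed
  show ?thesis
    unfolding ueq A B using C by (simp only:)
qed

end
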